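(* For $k\ge0$ let $(\mathcal{Y}Sym)^k$ be the span of $\{M_t: t\in\mathcal{Y}^k\}$. Then the decomposition $\mathcal{Y}Sym=\bigoplus_{k\ge0}(\mathcal{Y}Sym)^k$ is a coalgebra grading, and with this grading $\mathcal{Y}Sym$ is a cofree graded coalgebra (on $V=(\mathcal{Y}Sym)^1$).
   Context: $\mathcal{Y}_n$ is the set of rooted planar binary trees with $n$ internal nodes; $\mathcal{Y}_0=\{|\}$. $s\vee t$ denotes the tree with left subtree $s$ and right subtree $t$ at the root; each $t\ne|$ is uniquely $t_l\vee t_r$. The Tamari order on $\mathcal{Y}_n$ is generated by replacing a subtree $(a\vee b)\vee c$ by the larger $a\vee(b\vee c)$. $s\backslash t$: $|\backslash t=t$, $s\backslash t=s_l\vee(s_r\backslash t)$. A tree $t\neq|$ is progressive if $t_r=|$; every $t\ne|$ has a unique decomposition $t=t_1\backslash t_2\backslash\cdots\backslash t_k$ into progressive trees. $\mathcal{Y}^0=\mathcal{Y}_0$, and for $k\ge1$, $\mathcal{Y}^k$ is the set of trees (of all sizes) with exactly $k$ progressive components. $\mathcal{Y}Sym$ is the graded Hopf algebra over $\mathbb{Q}$ with basis $\{F_t\}$; leaves of $t\in\mathcal{Y}_n$ are numbered $0,\dots,n$; splitting $t$ at leaf $i$, $t\to(t_0,t_1)$, is defined recursively by: $|\to(|,|)$; for $t=t_l\vee t_r$, if leaf $i$ is in $t_l$ and $t_l\to(a,b)$ there then $t\to(a,b\vee t_r)$, if leaf $i$ is in $t_r$ and $t_r\to(c,d)$ there then $t\to(t_l\vee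 c,d)$. Coproduct: $\Delta(F_t)=\sum_{i=0}^nF_{t_0}\otimes F_{t_1}$. Monomial basis: $M_t=\sum_{t\le s}\mu_{\mathcal{Y}_n}(t,s)F_s$ (Möbius function of the Tamari order). A coalgebra grading is a decomposition $C=\bigoplus_k C^k$ with $\Delta(C^k)\subseteq\sum_{i+j=k}C^i\otimes C^j$ and counit vanishing on $C^k$, $k\ge1$. The cofree graded coalgebra on a vector space $V$ is $Q(V)=\bigoplus_{k\ge0}V^{\otimes k}$ with deconcatenation coproduct $\Delta(v_1\otimes\cdots\otimes v_k)=\sum_{i=0}^k(v_1\otimes\cdots\otimes v_i)\otimes(v_{i+1}\otimes\cdots\otimes v_k)$; a graded coalgebra is cofree if it is isomorphic as a graded coalgebra to some $Q(V)$. *)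

theory Defs
  imports Complex_Main
begin

text \<open>Leaf is the tree with no internal node; Node s t is s \<or> t.\<close>
datatype tree = Leaf | Node tree tree

fun inodes :: "tree \<Rightarrow> nat" where
  "inodes Leaf = 0"
| "inodes (Node l r) = inodes l + inodes r + 1"

definition Y :: "nat \<Rightarrow> tree set" where
  "Y n = {t. inodes t = n}"

inductive tamari_step :: "tree \<Rightarrow> tree \<Rightarrow> bool" where
  rot: "tamari_step (Node (Node a b) c) (Node a (Node b c))"
| left: "tamari_step l l' \<Longrightarrow> tamari_step (Node l r) (Node l' r)"
| right: "tamari_step r r' \<Longrightarrow> tamari_step (Node l r) (Node l r')"

definition tamari_le :: "tree \<Rightarrow> tree \<Rightarrow> bool" where
  "tamari_le = tamari_step\<^sup>*\<^sup>*"

text \<open>Moebius function of a finite poset (A, le), via its defining recursion;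
  it is set to 0 outside A so that it is uniquely determined.\<close>
definition mobius_on :: "'a set \<Rightarrow> ('a \<Rightarrow> 'a \<Rightarrow> bool) \<Rightarrow> 'a \<Rightarrow> 'a \<Rightarrow> int" where
  "mobius_on A le = (THE f.
     (\<forall>x\<in>A. \<forall>y\<in>A. f x y =
        (if x = y then 1
         else if le x y then - (\<Sum>z\<in>{z\<in>A. le x z \<and> le z y \<and> z \<noteq> y}. f x z)
         else 0)) \<and>
     (\<forall>x y. (x \<notin> A \<or> y \<notin> A) \<longrightarrow> f x y = 0))"

fun under :: "tree \<Rightarrow> tree \<Rightarrow> tree" where
  "under Leaf t = t"
| "under (Node l r) t = Node l (under r t)"

definition progressive :: "tree \<Rightarrow> bool" where
  "progressive t \<longleftrightarrow> (\<exists>l. t = Node l Leaf)"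

text \<open>Ycomp k = trees with exactly k progressive components (t = t1\t2\...\tk);
  Ycomp 0 = {Leaf}.\<close>
definition Ycomp :: "nat \<Rightarrow> tree set" where
  "Ycomp k = {t. \<exists>ts. length ts = k \<and> (\<forall>p\<in>set ts. progressive p) \<and> t = foldr under ts Leaf}"

text \<open>Splitting at leaf i (leaves numbered 0..inodes t from left to right).\<close>
fun split_at :: "tree \<Rightarrow> nat \<Rightarrow> tree \<times> tree" where
  "split_at Leaf i = (Leaf, Leaf)"
| "split_at (Node l r) i =
     (if i \<le> inodes l then (case split_at l i of (a, b) \<Rightarrow> (a, Node b r))
      else (case split_at r (i - inodes l - 1) of (c, d) \<Rightarrow> (Node l c, d)))"

text \<open>Elements of YSym are finitely supported coefficient functions in the basis F_t;
  elements of YSym \<otimes> YSym are finitely supported functions on pairs of trees.\<close>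
definition finsupp :: "('a \<Rightarrow> rat) \<Rightarrow> bool" where
  "finsupp f \<longleftrightarrow> finite {x. f x \<noteq> 0}"

definition YSym :: "(tree \<Rightarrow> rat) set" where
  "YSym = {f. finsupp f}"

definition F :: "tree \<Rightarrow> tree \<Rightarrow> rat" where
  "F t = (\<lambda>s. if s = t then 1 else 0)"

definition M :: "tree \<Rightarrow> tree \<Rightarrow> rat" where
  "M t = (\<lambda>s. of_int (mobius_on (Y (inodes t)) tamari_le t s))"

text \<open>Linear extension of Delta(F_t) = sum_{i=0}^{n} F_{t_0} \<otimes> F_{t_1}.\<close>
definition coprod :: "(tree \<Rightarrow> rat) \<Rightarrow> (tree \<times> tree \<Rightarrow> rat)" where
  "coprod f = (\<lambda>(a, b). \<Sum>t\<in>{t. f t \<noteq> 0}.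
      f t * of_nat (card {i. i \<le> inodes t \<and> split_at t i = (a, b)}))"

definition counit :: "(tree \<Rightarrow> rat) \<Rightarrow> rat" where
  "counit f = f Leaf"

definition tensor :: "('a \<Rightarrow> rat) \<Rightarrow> ('b \<Rightarrow> rat) \<Rightarrow> ('a \<times> 'b \<Rightarrow> rat)" where
  "tensor x y = (\<lambda>(a, b). x a * y b)"

definition lin_span :: "('a \<Rightarrow> rat) set \<Rightarrow> ('a \<Rightarrow> rat) set" where
  "lin_span S = {f. \<exists>A c. finite A \<and> A \<subseteq> S \<and> f = (\<lambda>x. \<Sum>v\<in>A. c v * v x)}"

definition lin_indep_on :: "'i set \<Rightarrow> ('i \<Rightarrow> 'a \<Rightarrow> rat) \<Rightarrow> bool" where
  "lin_indep_on I v \<longleftrightarrow> (\<forall>A c. finite A \<and> A \<subseteq> I \<and> (\<forall>x. (\<Sum>w\<in>A. c w * v w x) = 0)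
      \<longrightarrow> (\<forall>w\<in>A. c w = 0))"

definition grade :: "nat \<Rightarrow> (tree \<Rightarrow> rat) set" where
  "grade k = lin_span {M t | t. t \<in> Ycomp k}"

end

theory Submission
  imports Defs
begin

fun pot :: "tree \<Rightarrow> nat" where
  "pot Leaf = 0"
| "pot (Node l r) = pot l + pot r + inodes r"

lemma step_pot: "tamari_step s t \<Longrightarrow> pot s < pot t \<and> inodes s = inodes t"
  by (induction rule: tamari_step.induct) auto

lemma tranclp_pot: "tamari_step\<^sup>+\<^sup>+ s t \<Longrightarrow> pot s < pot t \<and> inodes s = inodes t"
  by (induction rule: tranclp_induct) (auto dest: step_pot)

lemma le_size: "tamari_le s t \<Longrightarrow> inodes s = inodes t"
  unfolding tamari_le_def
  by (induction rule: rtranclp_induct) (auto dest: step_pot)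

lemma le_pot: "tamari_le s t \<Longrightarrow> s \<noteq> t \<Longrightarrow> pot s < pot t"
  unfolding tamari_le_def
  by (metis rtranclpD tranclp_pot)

lemma le_pot2: "tamari_le s t \<Longrightarrow> pot s \<le> pot t"
  using le_pot by fastforce

lemma le_refl[simp]: "tamari_le s s" unfolding tamari_le_def by simp

lemma le_trans: "tamari_le s t \<Longrightarrow> tamari_le t u \<Longrightarrow> tamari_le s u"
  unfolding tamari_le_def by simp

lemma le_antisym: "tamari_le s t \<Longrightarrow> tamari_le t s \<Longrightarrow> s = t"
  by (metis le_pot less_asym)

lemma finite_le_size: "finite {t. inodes t \<le> n}"
proof (induction n)
  case 0
  have "{t. inodes t \<le> 0} = {Leaf}" by (auto elim: inodes.elims)
  then show ?case by simp
next
  case (Suc n)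
  have "{t. inodes t \<le> Suc n} \<subseteq> insert Leaf ((\<lambda>(l,r). Node l r) ` ({t. inodes t \<le> n} \<times> {t. inodes t \<le> n}))"
  proof
    fix t assume "t \<in> {t. inodes t \<le> Suc n}"
    then show "t \<in> insert Leaf ((\<lambda>(l,r). Node l r) ` ({t. inodes t \<le> n} \<times> {t. inodes t \<le> n}))"
      by (cases t) auto
  qed
  then show ?case using Suc by (meson finite_SigmaI finite_imageI finite_insert finite_subset)
qed

lemma finite_Y: "finite (Y n)"
  unfolding Y_def by (rule finite_subset[OF _ finite_le_size[of n]]) auto

lemma finite_up: "finite {z. tamari_le x z}"
  by (rule finite_subset[OF _ finite_Y[of "inodes x"]]) (auto simp: Y_def le_size)

lemma finite_up': "finite {z. tamari_le x z \<and> P z}"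
  by (rule finite_subset[OF _ finite_up[of x]]) auto

function mu :: "tree \<Rightarrow> tree \<Rightarrow> int" where
  "mu x y = (if x = y then 1 else if tamari_le x y then
      - (\<Sum>z\<in>{z. tamari_le x z \<and> tamari_le z y \<and> z \<noteq> y}. mu x z) else 0)"
  by auto
termination
  by (relation "measure (\<lambda>(x,y). pot y)") (auto intro: le_pot)

declare mu.simps[simp del]

function nu :: "tree \<Rightarrow> tree \<Rightarrow> int" where
  "nu x y = (if x = y then 1 else if tamari_le x y then
      - (\<Sum>z\<in>{z. tamari_le x z \<and> tamari_le z y \<and> z \<noteq> x}. nu z y) else 0)"
  by auto
termination
  apply (relation "measure (\<lambda>(x,y). pot y - pot x)")
   apply auto
  by (metis diff_less_mono2 le_pot le_pot2 order.strict_trans1)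

declare nu.simps[simp del]

lemma mu_refl[simp]: "mu x x = 1" by (simp add: mu.simps)
lemma mu_zero: "\<not> tamari_le x y \<Longrightarrow> mu x y = 0"
  by (metis le_refl mu.simps)
lemma nu_refl[simp]: "nu x x = 1" by (simp add: nu.simps)
lemma nu_zero: "\<not> tamari_le x y \<Longrightarrow> nu x y = 0"
  by (metis le_refl nu.simps)

lemma mu_left: "(\<Sum>z\<in>{z. tamari_le x z \<and> tamari_le z y}. mu x z) = (if x = y then 1 else 0)"
proof (cases "tamari_le x y")
  case True
  show ?thesis
  proof (cases "x = y")
    case True
    then have "{z. tamari_le x z \<and> tamari_le z y} = {x}" using le_antisym by auto
    then show ?thesis using True by simp
  next
    case False
    have e: "{z. tamari_le x z \<and> tamari_le z y} = insert y {z. tamari_le x z \<and> tamari_le z y \<and> z \<noteq> y}"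
      using \<open>tamari_le x y\<close> by auto
    have "mu x y = - (\<Sum>z\<in>{z. tamari_le x z \<and> tamari_le z y \<and> z \<noteq> y}. mu x z)"
      using False True by (subst mu.simps) simp
    then show ?thesis unfolding e using False by (subst sum.insert) (auto intro: finite_up')
  qed
next
  case False
  then have e: "{z. tamari_le x z \<and> tamari_le z y} = {}" using le_trans by blast
  have "x \<noteq> y" using False by auto
  then show ?thesis unfolding e by simp
qed

lemma nu_right: "(\<Sum>z\<in>{z. tamari_le x z \<and> tamari_le z y}. nu z y) = (if x = y then 1 else 0)"
proof (cases "tamari_le x y")
  case True
  show ?thesis
  proof (cases "x = y")
    case True
    then have "{z. tamari_le x z \<and> tamari_le z y} = {x}" using le_antisym by auto
    then show ?thesis using True by simp
  next
    case False
    have e: "{z. tamari_le x z \<and> tamari_le z y} = insert x {z. tamari_le x z \<and> tamari_le z y \<and> z \<noteq> x}"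
      using \<open>tamari_le x y\<close> by auto
    have "nu x y = - (\<Sum>z\<in>{z. tamari_le x z \<and> tamari_le z y \<and> z \<noteq> x}. nu z y)"
      using False True by (subst nu.simps) simp
    then show ?thesis unfolding e using False by (subst sum.insert) (auto intro: finite_up')
  qed
next
  case False
  then have e: "{z. tamari_le x z \<and> tamari_le z y} = {}" using le_trans by blast
  have "x \<noteq> y" using False by auto
  then show ?thesis unfolding e by simp
qed

lemma mu_eq_nu: "mu x y = nu x y"
proof (cases "tamari_le x y")
  case False
  then show ?thesis by (simp add: mu_zero nu_zero)
next
  case True
  define U where "U = {z. tamari_le x z \<and> tamari_le z y}"
  have fU: "finite U" unfolding U_def by (rule finite_up')
  have yU: "y \<in> U" using True by (simp add: U_def)
  have "mu x y = (\<Sum>w\<in>U. mu x w * (if w = y then 1 else 0))"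
    using fU yU by (simp add: sum.delta' if_distrib cong: if_cong)
  also have "\<dots> = (\<Sum>w\<in>U. mu x w * (\<Sum>z\<in>{z. tamari_le w z \<and> tamari_le z y}. nu z y))"
    by (simp add: nu_right)
  also have "\<dots> = (\<Sum>w\<in>U. \<Sum>z\<in>U. if tamari_le w z then mu x w * nu z y else 0)"
  proof (rule sum.cong[OF refl])
    fix w assume w: "w \<in> U"
    have "{z. tamari_le w z \<and> tamari_le z y} = {z\<in>U. tamari_le w z}"
      using w by (auto simp: U_def intro: le_trans)
    then show "mu x w * (\<Sum>z\<in>{z. tamari_le w z \<and> tamari_le z y}. nu z y) =
        (\<Sum>z\<in>U. if tamari_le w z then mu x w * nu z y else 0)"
      using fU by (auto simp add: sum_distrib_left sum.inter_filter intro!: sum.cong)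
  qed
  also have "\<dots> = (\<Sum>z\<in>U. \<Sum>w\<in>U. if tamari_le w z then mu x w * nu z y else 0)"
    by (rule sum.swap)
  also have "\<dots> = (\<Sum>z\<in>U. (\<Sum>w\<in>{w. tamari_le x w \<and> tamari_le w z}. mu x w) * nu z y)"
  proof (rule sum.cong[OF refl])
    fix z assume z: "z \<in> U"
    have "{w. tamari_le x w \<and> tamari_le w z} = {w\<in>U. tamari_le w z}"
      using z by (auto simp: U_def intro: le_trans)
    then show "(\<Sum>w\<in>U. if tamari_le w z then mu x w * nu z y else 0) =
        (\<Sum>w\<in>{w. tamari_le x w \<and> tamari_le w z}. mu x w) * nu z y"
      using fU by (auto simp add: sum_distrib_right sum.inter_filter intro!: sum.cong)
  qed
  also have "\<dots> = (\<Sum>z\<in>U. if x = z then nu z y else 0)"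
    by (rule sum.cong[OF refl]) (simp add: mu_left)
  also have "\<dots> = nu x y"
    using fU True by (simp add: U_def)
  finally show ?thesis .
qed

lemma mu_right: "(\<Sum>z\<in>{z. tamari_le x z \<and> tamari_le z y}. mu z y) = (if x = y then 1 else 0)"
  using nu_right by (simp add: mu_eq_nu)

lemma Y_le: "x \<in> Y n \<Longrightarrow> tamari_le x z \<Longrightarrow> z \<in> Y n"
  by (simp add: Y_def le_size)

lemma mobius_Y: "mobius_on (Y n) tamari_le = (\<lambda>x y. if x \<in> Y n \<and> y \<in> Y n then mu x y else 0)"
proof -
  let ?A = "Y n"
  let ?g = "\<lambda>x y. if x \<in> Y n \<and> y \<in> Y n then mu x y else 0"
  define P where "P = (\<lambda>f.
     (\<forall>x\<in>?A. \<forall>y\<in>?A. f x y =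
        (if x = y then 1
         else if tamari_le x y then - (\<Sum>z\<in>{z\<in>?A. tamari_le x z \<and> tamari_le z y \<and> z \<noteq> y}. f x z)
         else 0)) \<and>
     (\<forall>x y. (x \<notin> ?A \<or> y \<notin> ?A) \<longrightarrow> f x y = (0::int)))"
  have setA: "{z\<in>?A. tamari_le x z \<and> tamari_le z y \<and> z \<noteq> y} = {z. tamari_le x z \<and> tamari_le z y \<and> z \<noteq> y}"
    if "x \<in> ?A" for x y using that Y_le by blast
  have Pg: "P ?g"
    unfolding P_def
  proof (intro conjI ballI allI impI)
    fix x y assume x: "x \<in> ?A" and y: "y \<in> ?A"
    have "(\<Sum>z\<in>{z. tamari_le x z \<and> tamari_le z y \<and> z \<noteq> y}. ?g x z)
        = (\<Sum>z\<in>{z. tamari_le x z \<and> tamari_le z y \<and> z \<noteq> y}. mu x z)"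
      by (rule sum.cong) (use x Y_le in \<open>auto simp del: mu.simps\<close>)
    then show "?g x y = (if x = y then 1 else if tamari_le x y then - (\<Sum>z\<in>{z\<in>?A. tamari_le x z \<and> tamari_le z y \<and> z \<noteq> y}. ?g x z) else 0)"
    proof -
      have "?g x y = mu x y" using x y by simp
      also have "\<dots> = (if x = y then 1 else if tamari_le x y then
          - (\<Sum>z\<in>{z. tamari_le x z \<and> tamari_le z y \<and> z \<noteq> y}. mu x z) else 0)"
        by (rule mu.simps)
      finally show ?thesis using setA[OF x, of y] \<open>(\<Sum>z\<in>_. ?g x z) = _\<close> by simp
    qed
  qed auto
  have uniq: "f = ?g" if Pf: "P f" for f
  proof (intro ext)
    fix x y
    show "f x y = ?g x y"
    proof (cases "x \<in> ?A \<and> y \<in> ?A")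
      case False
      have "\<forall>x y. (x \<notin> ?A \<or> y \<notin> ?A) \<longrightarrow> f x y = 0" using Pf unfolding P_def by (rule conjunct2)
      then show ?thesis using False by auto
    next
      case True
      then have x: "x \<in> ?A" by simp
      have "\<forall>y. y \<in> ?A \<longrightarrow> f x y = mu x y" (is "\<forall>y. ?Q y")
      proof
        fix y
        show "?Q y"
        proof (induction y rule: measure_induct_rule[of pot])
          case (less y)
          show ?case
          proof
            assume y: "y \<in> ?A"
            have "(\<Sum>z\<in>{z. tamari_le x z \<and> tamari_le z y \<and> z \<noteq> y}. f x z)
                = (\<Sum>z\<in>{z. tamari_le x z \<and> tamari_le z y \<and> z \<noteq> y}. mu x z)"
            proof (rule sum.cong[OF refl])
              fix z assume z: "z \<in> {z. tamari_le x z \<and> tamari_le z y \<and> z \<noteq> y}"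
              then have "pot z < pot y" "z \<in> ?A" using le_pot Y_le[OF x] by auto
              then show "f x z = mu x z" using less by blast
            qed
            moreover have "f x y = (if x = y then 1 else if tamari_le x y then
                - (\<Sum>z\<in>{z. tamari_le x z \<and> tamari_le z y \<and> z \<noteq> y}. f x z) else 0)"
            proof -
              have "\<forall>x\<in>?A. \<forall>y\<in>?A. f x y =
                (if x = y then 1
                 else if tamari_le x y then - (\<Sum>z\<in>{z\<in>?A. tamari_le x z \<and> tamari_le z y \<and> z \<noteq> y}. f x z)
                 else 0)" using Pf unfolding P_def by (rule conjunct1)
              then show ?thesis using x y setA[OF x, of y] by simp
            qed
            moreover have "mu x y = (if x = y then 1 else if tamari_le x y then
                - (\<Sum>z\<in>{z. tamari_le x z \<and> tamari_le z y \<and> z \<noteq> y}. mu x z) else 0)"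
              by (rule mu.simps)
            ultimately show "f x y = mu x y" by metis
          qed
        qed
      qed
      then show ?thesis using True by simp
    qed
  qed
  have ex: "\<exists>!f. P f" using Pg uniq by blast
  show ?thesis
    unfolding mobius_on_def P_def[symmetric]
    apply (rule the1_equality)
     apply (rule ex)
    apply (rule Pg)
    done
qed

lemma M_mu: "M t = (\<lambda>s. of_int (mu t s))"
proof
  fix s
  show "M t s = of_int (mu t s)"
  proof (cases "s \<in> Y (inodes t)")
    case True
    have "t \<in> Y (inodes t)" by (simp add: Y_def)
    then show ?thesis using True by (simp add: M_def mobius_Y)
  next
    case False
    then have "t \<noteq> s" "\<not> tamari_le t s" by (auto simp: Y_def le_size)
    then show ?thesis using False by (simp add: M_def mobius_Y mu_zero)
  qed
qed

lemma le_Node_left: "tamari_le l l' \<Longrightarrow> tamari_le (Node l r) (Node l' r)"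
  unfolding tamari_le_def
  by (induction rule: rtranclp_induct) (auto intro: rtranclp.rtrancl_into_rtrancl tamari_step.left)

lemma le_Node_right: "tamari_le r r' \<Longrightarrow> tamari_le (Node l r) (Node l r')"
  unfolding tamari_le_def
  by (induction rule: rtranclp_induct) (auto intro: rtranclp.rtrancl_into_rtrancl tamari_step.right)

lemma le_rot: "tamari_le (Node (Node a b) c) (Node a (Node b c))"
  unfolding tamari_le_def by (auto intro: tamari_step.rot)

lemma under_Leaf[simp]: "under a Leaf = a"
  by (induction a) auto

lemma inodes_under[simp]: "inodes (under a b) = inodes a + inodes b"
  by (induction a) auto

lemma under_assoc: "under (under a b) c = under a (under b c)"
  by (induction a) auto

lemma step_under_mono: "tamari_step a a' \<Longrightarrow> tamari_step (under a b) (under a' b)"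
  by (induction rule: tamari_step.induct) (auto intro: tamari_step.intros)

lemma le_under_mono1: "tamari_le a a' \<Longrightarrow> tamari_le (under a b) (under a' b)"
  unfolding tamari_le_def
  by (induction rule: rtranclp_induct) (auto intro: rtranclp.rtrancl_into_rtrancl step_under_mono)

lemma le_under_mono2: "tamari_le b b' \<Longrightarrow> tamari_le (under a b) (under a b')"
  by (induction a) (auto intro: le_Node_right)

lemma split_Node: "split_at (Node l r) i =
   (if i \<le> inodes l then (fst (split_at l i), Node (snd (split_at l i)) r)
    else (Node l (fst (split_at r (i - inodes l - 1))), snd (split_at r (i - inodes l - 1))))"
  by (simp add: case_prod_unfold)

declare split_at.simps(2)[simp del]

lemma split_size: "i \<le> inodes t \<Longrightarrow> inodes (fst (split_at t i)) = i \<and> inodes (snd (split_at t i)) = inodes t - i"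
  by (induction t arbitrary: i) (auto simp: split_Node)

lemma split_0: "split_at b 0 = (Leaf, b)"
  by (induction b) (auto simp: split_Node)

lemma split_under: "split_at (under a b) (inodes a) = (a, b)"
proof (induction a)
  case Leaf
  then show ?case by (simp add: split_0)
next
  case (Node l r)
  then show ?case by (auto simp: split_Node)
qed

lemma le_Node_under: "tamari_le (Node (under x y) r) (under x (Node y r))"
proof (induction x)
  case Leaf then show ?case by simp
next
  case (Node xl xr)
  have "tamari_le (Node (Node xl (under xr y)) r) (Node xl (Node (under xr y) r))" by (rule le_rot)
  moreover have "tamari_le (Node xl (Node (under xr y) r)) (Node xl (under xr (Node y r)))"
    by (rule le_Node_right[OF Node.IH(2)])
  ultimately show ?case by (auto intro: le_trans)
qed

lemma le_split_under: "tamari_le t (under (fst (split_at t i)) (snd (split_at t i)))"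
proof (induction t arbitrary: i)
  case Leaf then show ?case by simp
next
  case (Node l r)
  show ?case
  proof (cases "i \<le> inodes l")
    case True
    have "tamari_le (Node l r) (Node (under (fst (split_at l i)) (snd (split_at l i))) r)"
      by (rule le_Node_left[OF Node.IH(1)])
    then show ?thesis using True by (auto simp: split_Node intro: le_trans le_Node_under)
  next
    case False
    then show ?thesis by (auto simp: split_Node intro: le_Node_right Node.IH(2))
  qed
qed

lemma step_le: "tamari_step a b \<Longrightarrow> tamari_le a b"
  unfolding tamari_le_def by simp

lemma step_split_mono: "tamari_step s s' \<Longrightarrow>
   tamari_le (fst (split_at s i)) (fst (split_at s' i)) \<and> tamari_le (snd (split_at s i)) (snd (split_at s' i))"
proof (induction arbitrary: i rule: tamari_step.induct)
  case (rot a b c)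
  show ?case
  proof (cases "i \<le> inodes a")
    case True then show ?thesis by (auto simp: split_Node le_rot)
  next
    case False
    show ?thesis
    proof (cases "i \<le> inodes a + inodes b + 1")
      case True then show ?thesis using False by (auto simp: split_Node)
    next
      case False2: False
      then show ?thesis using False by (auto simp: split_Node le_rot)
    qed
  qed
next
  case (left l l' r)
  then show ?case using step_pot[OF left.hyps] step_le[OF left.hyps] by (auto simp: split_Node intro: le_Node_left)
next
  case (right r r' l)
  then show ?case using step_pot[OF right.hyps] step_le[OF right.hyps] by (auto simp: split_Node intro: le_Node_right)
qed

lemma le_split_mono: "tamari_le s s' \<Longrightarrow>
   tamari_le (fst (split_at s i)) (fst (split_at s' i)) \<and> tamari_le (snd (split_at s i)) (snd (split_at s' i))"
  unfolding tamari_le_def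
proof (induction rule: rtranclp_induct)
  case base then show ?case by simp
next
  case (step y z)
  from step_split_mono[OF step(2), of i] step(3) show ?case
    unfolding tamari_le_def by (meson rtranclp_trans)
qed

lemma galois: "tamari_le s (under a b) \<longleftrightarrow>
   tamari_le (fst (split_at s (inodes a))) a \<and> tamari_le (snd (split_at s (inodes a))) b"
proof
  assume "tamari_le s (under a b)"
  from le_split_mono[OF this, of "inodes a"] show "tamari_le (fst (split_at s (inodes a))) a \<and> tamari_le (snd (split_at s (inodes a))) b"
    by (simp add: split_under)
next
  assume h: "tamari_le (fst (split_at s (inodes a))) a \<and> tamari_le (snd (split_at s (inodes a))) b"
  have "tamari_le s (under (fst (split_at s (inodes a))) (snd (split_at s (inodes a))))" by (rule le_split_under)
  moreover have "tamari_le \<dots> (under a (snd (split_at s (inodes a))))" using h by (auto intro: le_under_mono1)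
  moreover have "tamari_le \<dots> (under a b)" using h by (auto intro: le_under_mono2)
  ultimately show "tamari_le s (under a b)" by (meson le_trans)
qed

fun comps :: "tree \<Rightarrow> tree list" where
  "comps Leaf = []"
| "comps (Node l r) = Node l Leaf # comps r"

abbreviation fld :: "tree list \<Rightarrow> tree" where
  "fld ts \<equiv> foldr under ts Leaf"

lemma fld_comps[simp]: "fld (comps t) = t"
  by (induction t) auto

lemma comps_prog: "p \<in> set (comps t) \<Longrightarrow> progressive p"
  by (induction t) (auto simp: progressive_def)

lemma comps_fld: "\<forall>p\<in>set ts. progressive p \<Longrightarrow> comps (fld ts) = ts"
  by (induction ts) (auto simp: progressive_def)

lemma Ycomp_eq: "Ycomp k = {t. length (comps t) = k}"
  unfolding Ycomp_def
proof (intro set_eqI iffI; simp)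
  fix t assume "\<exists>ts. length ts = k \<and> (\<forall>p\<in>set ts. progressive p) \<and> t = fld ts"
  then show "length (comps t) = k" using comps_fld by auto
next
  fix t assume "length (comps t) = k"
  then show "\<exists>ts. length ts = k \<and> (\<forall>p\<in>set ts. progressive p) \<and> t = fld ts"
    using comps_prog by (intro exI[of _ "comps t"]) auto
qed

lemma Ycomp1: "Ycomp 1 = {p. progressive p}"
  unfolding Ycomp_eq
proof (intro set_eqI iffI; simp)
  fix t assume "length (comps t) = Suc 0"
  then show "progressive t" by (cases t; cases "snd (t, t)") (auto simp: progressive_def elim: comps.elims)
next
  fix t assume "progressive t"
  then show "length (comps t) = Suc 0" by (auto simp: progressive_def)
qed

lemma comps_under: "comps (under a b) = comps a @ comps b"
  by (induction a) auto

lemma fld_append: "fld (xs @ ys) = under (fld xs) (fld ys)"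
  by (induction xs) (auto simp: under_assoc)

lemma under_take_drop: "under (fld (take j (comps t))) (fld (drop j (comps t))) = t"
  by (metis append_take_drop_id fld_append fld_comps)

lemma under_decomp: "under a b = t \<Longrightarrow> \<exists>j\<le>length (comps t). a = fld (take j (comps t)) \<and> b = fld (drop j (comps t))"
  by (intro exI[of _ "length (comps a)"]) (auto simp: comps_under)

lemma length_comps_take: "j \<le> length (comps t) \<Longrightarrow> length (comps (fld (take j (comps t)))) = j"
proof -
  assume "j \<le> length (comps t)"
  moreover have "\<forall>p\<in>set (take j (comps t)). progressive p" using comps_prog by (meson in_set_takeD)
  ultimately show ?thesis by (simp add: comps_fld)
qed

definition zeta :: "tree \<Rightarrow> tree \<Rightarrow> rat" where
  "zeta x y = (if tamari_le x y then 1 else 0)"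

abbreviation mq :: "tree \<Rightarrow> tree \<Rightarrow> rat" where
  "mq x y \<equiv> of_int (mu x y)"

lemma M_mq: "M t s = mq t s" by (simp add: M_mu)

lemma mq_size: "mq x y \<noteq> 0 \<Longrightarrow> inodes x = inodes y"
  by (metis le_size mu_zero of_int_0)

lemma idL: assumes x: "x \<in> Y n"
  shows "(\<Sum>z\<in>Y n. mq x z * zeta z y) = (if x = y then 1 else 0)"
proof -
  have "(\<Sum>z\<in>Y n. mq x z * zeta z y) = (\<Sum>z\<in>Y n. if tamari_le x z \<and> tamari_le z y then mq x z else 0)"
    by (rule sum.cong) (auto simp: zeta_def mu_zero)
  also have "\<dots> = (\<Sum>z\<in>{z\<in>Y n. tamari_le x z \<and> tamari_le z y}. mq x z)"
    by (simp add: sum.inter_filter finite_Y)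
  also have "{z\<in>Y n. tamari_le x z \<and> tamari_le z y} = {z. tamari_le x z \<and> tamari_le z y}"
    using x Y_le by blast
  also have "(\<Sum>z\<in>{z. tamari_le x z \<and> tamari_le z y}. mq x z) = of_int (\<Sum>z\<in>{z. tamari_le x z \<and> tamari_le z y}. mu x z)"
    by simp
  finally show ?thesis by (simp add: mu_left)
qed

lemma Y_le2: "y \<in> Y n \<Longrightarrow> tamari_le z y \<Longrightarrow> z \<in> Y n"
  by (simp add: Y_def le_size)

lemma idR: assumes y: "y \<in> Y n"
  shows "(\<Sum>z\<in>Y n. zeta x z * mq z y) = (if x = y then 1 else 0)"
proof -
  have "(\<Sum>z\<in>Y n. zeta x z * mq z y) = (\<Sum>z\<in>Y n. if tamari_le x z \<and> tamari_le z y then mq z y else 0)"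
    by (rule sum.cong) (auto simp: zeta_def mu_zero)
  also have "\<dots> = (\<Sum>z\<in>{z\<in>Y n. tamari_le x z \<and> tamari_le z y}. mq z y)"
    by (simp add: sum.inter_filter finite_Y)
  also have "{z\<in>Y n. tamari_le x z \<and> tamari_le z y} = {z. tamari_le x z \<and> tamari_le z y}"
    using y Y_le2 by blast
  also have "(\<Sum>z\<in>{z. tamari_le x z \<and> tamari_le z y}. mq z y) = of_int (\<Sum>z\<in>{z. tamari_le x z \<and> tamari_le z y}. mu z y)"
    by simp
  finally show ?thesis by (simp add: mu_right)
qed

lemma card_split: "card {i. i \<le> inodes s \<and> split_at s i = (p, q)} =
   (if inodes p \<le> inodes s \<and> split_at s (inodes p) = (p, q) then 1 else 0)"
proof -
  have "{i. i \<le> inodes s \<and> split_at s i = (p, q)} =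
     (if inodes p \<le> inodes s \<and> split_at s (inodes p) = (p, q) then {inodes p} else {})"
    using split_size by (auto, metis fst_conv)+
  then show ?thesis by simp
qed

lemma supp_M: "{s. M t s \<noteq> 0} \<subseteq> Y (inodes t)"
  using mq_size by (auto simp: M_mq Y_def)

lemma coprod_M_split: "coprod (M t) (p, q) =
  (\<Sum>s\<in>Y (inodes t). mq t s * (if inodes p \<le> inodes s \<and> split_at s (inodes p) = (p, q) then 1 else 0))"
proof -
  have "coprod (M t) (p, q) = (\<Sum>s\<in>{s. M t s \<noteq> 0}. M t s * of_nat (card {i. i \<le> inodes s \<and> split_at s i = (p, q)}))"
    by (simp add: coprod_def)
  also have "\<dots> = (\<Sum>s\<in>Y (inodes t). M t s * of_nat (card {i. i \<le> inodes s \<and> split_at s i = (p, q)}))"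
    by (rule sum.mono_neutral_left) (use supp_M finite_Y in auto)
  finally show ?thesis by (auto simp add: card_split M_mq intro!: sum.cong)
qed

theorem coprod_M: "coprod (M t) (p, q) =
  (\<Sum>j\<le>length (comps t). M (fld (take j (comps t))) p * M (fld (drop j (comps t))) q)"
proof -
  define n where "n = inodes t"
  define cs where "cs = comps t"
  define A where "A j = fld (take j cs)" for j
  define B where "B j = fld (drop j cs)" for j
  have AB: "under (A j) (B j) = t" for j unfolding A_def B_def cs_def by (rule under_take_drop)
  have tY: "t \<in> Y n" by (simp add: Y_def n_def)
  have RHS: "(\<Sum>j\<le>length (comps t). M (fld (take j (comps t))) p * M (fld (drop j (comps t))) q)
      = (\<Sum>j\<le>length cs. mq (A j) p * mq (B j) q)"
    by (simp add: A_def B_def cs_def M_mq)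
  show ?thesis
  proof (cases "inodes p + inodes q = n")
    case False
    have "coprod (M t) (p, q) = 0"
      unfolding coprod_M_split
    proof (rule sum.neutral, rule ballI)
      fix s assume s: "s \<in> Y (inodes t)"
      have ns: "\<not> (inodes p \<le> inodes s \<and> split_at s (inodes p) = (p, q))"
        using False s split_size[of "inodes p" s] by (auto simp: Y_def n_def)
      then show "mq t s * (if inodes p \<le> inodes s \<and> split_at s (inodes p) = (p, q) then 1 else 0) = 0"
        by (simp only: if_not_P[OF ns] if_False mult_zero_right)
    qed
    moreover have "(\<Sum>j\<le>length cs. mq (A j) p * mq (B j) q) = 0"
    proof (rule sum.neutral, rule ballI)
      fix j
      show "mq (A j) p * mq (B j) q = 0"
      proof (rule ccontr)
        assume "mq (A j) p * mq (B j) q \<noteq> 0"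
        then have "inodes (A j) = inodes p" "inodes (B j) = inodes q" using mq_size by auto
        then show False using False AB[of j] inodes_under[of "A j" "B j"] by (simp add: n_def)
      qed
    qed
    ultimately show ?thesis using RHS by simp
  next
    case True
    define i where "i = inodes p"
    have pY: "p \<in> Y i" and qY: "q \<in> Y (n - i)" using True by (auto simp: Y_def i_def)
    have ind: "(if inodes p \<le> inodes s \<and> split_at s (inodes p) = (p, q) then 1 else 0) =
        (\<Sum>a\<in>Y i. \<Sum>b\<in>Y (n - i). zeta s (under a b) * (mq a p * mq b q))" if s: "s \<in> Y n" for s
    proof -
      have ile: "i \<le> inodes s" using s True by (simp add: Y_def i_def)
      have s0: "fst (split_at s i) \<in> Y i" and s1: "snd (split_at s i) \<in> Y (n - i)"
        using split_size[OF ile] s by (auto simp: Y_def)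
      have "(\<Sum>a\<in>Y i. \<Sum>b\<in>Y (n - i). zeta s (under a b) * (mq a p * mq b q))
          = (\<Sum>a\<in>Y i. \<Sum>b\<in>Y (n - i). (zeta (fst (split_at s i)) a * mq a p) * (zeta (snd (split_at s i)) b * mq b q))"
      proof (intro sum.cong refl)
        fix a b assume a: "a \<in> Y i"
        then have "inodes a = i" by (simp add: Y_def)
        then show "zeta s (under a b) * (mq a p * mq b q) =
            (zeta (fst (split_at s i)) a * mq a p) * (zeta (snd (split_at s i)) b * mq b q)"
          using galois[of s a b] by (simp add: zeta_def)
      qed
      also have "\<dots> = (\<Sum>a\<in>Y i. zeta (fst (split_at s i)) a * mq a p) * (\<Sum>b\<in>Y (n - i). zeta (snd (split_at s i)) b * mq b q)"
        by (simp add: sum_product)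
      also have "\<dots> = (if fst (split_at s i) = p then 1 else 0) * (if snd (split_at s i) = q then 1 else 0)"
        using idR[OF pY] idR[OF qY] by simp
      also have "\<dots> = (if split_at s i = (p, q) then 1 else 0)"
        by (auto simp: prod_eq_iff)
      finally show ?thesis using ile by (simp add: i_def)
    qed
    have "coprod (M t) (p, q) = (\<Sum>s\<in>Y n. mq t s * (\<Sum>a\<in>Y i. \<Sum>b\<in>Y (n - i). zeta s (under a b) * (mq a p * mq b q)))"
      unfolding coprod_M_split n_def[symmetric] by (rule sum.cong[OF refl]) (simp add: ind)
    also have "\<dots> = (\<Sum>s\<in>Y n. \<Sum>a\<in>Y i. \<Sum>b\<in>Y (n - i). (mq a p * mq b q) * (mq t s * zeta s (under a b)))"
      by (simp add: sum_distrib_left mult_ac)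
    also have "\<dots> = (\<Sum>a\<in>Y i. \<Sum>b\<in>Y (n - i). \<Sum>s\<in>Y n. (mq a p * mq b q) * (mq t s * zeta s (under a b)))"
      by (subst sum.swap) (simp add: sum.swap[of _ "Y n"])
    also have "\<dots> = (\<Sum>a\<in>Y i. \<Sum>b\<in>Y (n - i). (mq a p * mq b q) * (if t = under a b then 1 else 0))"
      by (simp add: sum_distrib_left[symmetric] idL[OF tY])
    also have "\<dots> = (\<Sum>(a, b)\<in>Y i \<times> Y (n - i). if under a b = t then mq a p * mq b q else 0)"
      by (auto simp add: sum.cartesian_product eq_commute[of t] intro!: sum.cong)
    also have "\<dots> = (\<Sum>x\<in>Y i \<times> Y (n - i). if under (fst x) (snd x) = t then mq (fst x) p * mq (snd x) q else 0)"
      by (simp add: case_prod_unfold)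
    also have "\<dots> = (\<Sum>x\<in>{x\<in>Y i \<times> Y (n - i). under (fst x) (snd x) = t}. mq (fst x) p * mq (snd x) q)"
      by (rule sum.inter_filter[symmetric]) (simp add: finite_Y)
    also have "\<dots> = (\<Sum>j\<in>{j. j \<le> length cs \<and> inodes (A j) = i}. mq (A j) p * mq (B j) q)"
    proof (rule sum.reindex_bij_witness[where j="\<lambda>x. length (comps (fst x))" and i="\<lambda>j. (A j, B j)"])
      fix j assume j: "j \<in> {j. j \<le> length cs \<and> inodes (A j) = i}"
      show "length (comps (fst (A j, B j))) = j"
        using j length_comps_take[of j t] by (simp add: A_def cs_def)
      show "(A j, B j) \<in> {x\<in>Y i \<times> Y (n - i). under (fst x) (snd x) = t}"
        using j AB[of j] inodes_under[of "A j" "B j"] by (auto simp: Y_def n_def)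
    next
      fix x assume x: "x \<in> {x\<in>Y i \<times> Y (n - i). under (fst x) (snd x) = t}"
      then obtain j where j: "j \<le> length cs" "fst x = A j" "snd x = B j"
        using under_decomp[of "fst x" "snd x" t] by (auto simp: A_def B_def cs_def)
      have lj: "length (comps (fst x)) = j" using j length_comps_take[of j t] by (simp add: A_def cs_def)
      show "(A (length (comps (fst x))), B (length (comps (fst x)))) = x"
        using j lj by (simp add: prod_eq_iff)
      show "length (comps (fst x)) \<in> {j. j \<le> length cs \<and> inodes (A j) = i}"
        using j lj x by (auto simp: Y_def)
      show "mq (A (length (comps (fst x)))) p * mq (B (length (comps (fst x)))) q = mq (fst x) p * mq (snd x) q"
        using j lj by simp
    qed
    also have "\<dots> = (\<Sum>j\<le>length cs. mq (A j) p * mq (B j) q)"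
    proof (rule sum.mono_neutral_left)
      show "\<forall>j\<in>{..length cs} - {j. j \<le> length cs \<and> inodes (A j) = i}. mq (A j) p * mq (B j) q = 0"
        using mq_size by (auto simp: i_def)
    qed auto
    finally show ?thesis using RHS by simp
  qed
qed

lemma sum_delta_mult: "finite A \<Longrightarrow> (\<Sum>t\<in>A. f t * (if t = u then 1 else 0)) = (if u \<in> A then f u else (0::rat))"
proof -
  have "(\<Sum>t\<in>A. f t * (if t = u then 1 else 0)) = (\<Sum>t\<in>A. if t = u then f u else 0)"
    by (rule sum.cong) auto
  also assume "finite A"
  then have "(\<Sum>t\<in>A. if t = u then f u else 0) = (if u \<in> A then f u else 0)" by (simp add: sum.delta')
  finally show ?thesis .
qed

definition coef :: "(tree \<Rightarrow> rat) \<Rightarrow> tree \<Rightarrow> rat" where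
  "coef f s = (\<Sum>t\<in>Y (inodes s). zeta t s * f t)"

lemma coef_sum: "coef (\<lambda>x. \<Sum>i\<in>I. h i x) s = (\<Sum>i\<in>I. coef (h i) s)"
proof (cases "finite I")
  case True
  then show ?thesis unfolding coef_def by (simp add: sum_distrib_left sum.swap[of _ I])
next
  case False
  then show ?thesis by (simp add: coef_def)
qed

lemma coef_scale: "coef (\<lambda>x. c * f x) s = c * coef f s"
  unfolding coef_def by (simp add: sum_distrib_left mult_ac)

lemma coef_zero: "coef (\<lambda>x. 0) s = 0"
  unfolding coef_def by simp

lemma coef_M: "coef (M t) s = (if t = s then 1 else 0)"
proof (cases "inodes t = inodes s")
  case True
  then have tY: "t \<in> Y (inodes s)" by (simp add: Y_def)
  have "coef (M t) s = (\<Sum>x\<in>Y (inodes s). mq t x * zeta x s)"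
    unfolding coef_def M_mq by (simp add: mult_ac)
  then show ?thesis using idL[OF tY] by simp
next
  case False
  have "coef (M t) s = 0"
    unfolding coef_def M_mq
    by (rule sum.neutral) (use False mq_size in \<open>auto simp: Y_def\<close>)
  then show ?thesis using False by auto
qed

lemma coef_expand_Y: "f u = (\<Sum>s\<in>Y (inodes u). coef f s * M s u)"
proof -
  have uY: "u \<in> Y (inodes u)" by (simp add: Y_def)
  have "(\<Sum>s\<in>Y (inodes u). coef f s * M s u) = (\<Sum>s\<in>Y (inodes u). \<Sum>t\<in>Y (inodes u). f t * (zeta t s * mq s u))"
  proof (rule sum.cong[OF refl])
    fix s assume "s \<in> Y (inodes u)"
    then have "inodes s = inodes u" by (simp add: Y_def)
    then show "coef f s * M s u = (\<Sum>t\<in>Y (inodes u). f t * (zeta t s * mq s u))"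
      by (simp add: coef_def M_mq sum_distrib_left sum_distrib_right mult_ac)
  qed
  also have "\<dots> = (\<Sum>t\<in>Y (inodes u). f t * (\<Sum>s\<in>Y (inodes u). zeta t s * mq s u))"
    by (subst sum.swap) (simp add: sum_distrib_left)
  also have "\<dots> = f u"
    using idR[OF uY] finite_Y uY by (simp add: sum_delta_mult)
  finally show ?thesis by simp
qed

lemma coef_supp_finite: assumes "finsupp f" shows "finite {s. coef f s \<noteq> 0}"
proof -
  have "{s. coef f s \<noteq> 0} \<subseteq> (\<Union>t\<in>{t. f t \<noteq> 0}. {s. tamari_le t s})"
  proof
    fix s assume "s \<in> {s. coef f s \<noteq> 0}"
    then obtain t where "zeta t s * f t \<noteq> 0" unfolding coef_def by (auto elim: sum.not_neutral_contains_not_neutral)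
    then show "s \<in> (\<Union>t\<in>{t. f t \<noteq> 0}. {s. tamari_le t s})" by (auto simp: zeta_def split: if_splits)
  qed
  moreover have "finite (\<Union>t\<in>{t. f t \<noteq> 0}. {s. tamari_le t s})"
    using assms finite_up unfolding finsupp_def by blast
  ultimately show ?thesis by (rule finite_subset)
qed

lemma coef_expand: assumes "finsupp f"
  shows "f = (\<lambda>u. \<Sum>s\<in>{s. coef f s \<noteq> 0}. coef f s * M s u)"
proof
  fix u
  have fin: "finite {s. coef f s \<noteq> 0}" using coef_supp_finite[OF assms] .
  have "(\<Sum>s\<in>{s. coef f s \<noteq> 0}. coef f s * M s u) = (\<Sum>s\<in>{s. coef f s \<noteq> 0} \<inter> Y (inodes u). coef f s * M s u)"
    by (rule sum.mono_neutral_right) (use fin mq_size in \<open>auto simp: Y_def M_mq\<close>)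
  also have "\<dots> = (\<Sum>s\<in>Y (inodes u). coef f s * M s u)"
    by (rule sum.mono_neutral_left) (use finite_Y in auto)
  finally show "f u = (\<Sum>s\<in>{s. coef f s \<noteq> 0}. coef f s * M s u)"
    using coef_expand_Y[of f u] by simp
qed

lemma span_zero: "(\<lambda>_. 0) \<in> lin_span S"
  unfolding lin_span_def by (intro CollectI exI[of _ "{}"] exI[of _ "\<lambda>_. 0"] conjI) auto

lemma span_base: "v \<in> S \<Longrightarrow> v \<in> lin_span S"
  unfolding lin_span_def by (intro CollectI exI[of _ "{v}"] exI[of _ "\<lambda>_. 1"] conjI) auto

lemma span_add: assumes "f \<in> lin_span S" "g \<in> lin_span S"
  shows "(\<lambda>x. f x + g x) \<in> lin_span S"
proof -
  obtain A c where A: "finite A" "A \<subseteq> S" "f = (\<lambda>x. \<Sum>v\<in>A. c v * v x)"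
    using assms(1) unfolding lin_span_def by blast
  obtain B d where B: "finite B" "B \<subseteq> S" "g = (\<lambda>x. \<Sum>v\<in>B. d v * v x)"
    using assms(2) unfolding lin_span_def by blast
  define e where "e v = (if v \<in> A then c v else 0) + (if v \<in> B then d v else 0)" for v
  have eq: "(\<lambda>x. f x + g x) = (\<lambda>x. \<Sum>v\<in>A \<union> B. e v * v x)"
  proof
    fix x
    have 1: "(\<Sum>v\<in>A \<union> B. (if v \<in> A then c v else 0) * v x) = (\<Sum>v\<in>A. c v * v x)"
      by (rule sum.mono_neutral_cong_right) (use A B in auto)
    have 2: "(\<Sum>v\<in>A \<union> B. (if v \<in> B then d v else 0) * v x) = (\<Sum>v\<in>B. d v * v x)"
      by (rule sum.mono_neutral_cong_right) (use A B in auto)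
    show "f x + g x = (\<Sum>v\<in>A \<union> B. e v * v x)"
      unfolding e_def distrib_right sum.distrib 1 2 using A B by simp
  qed
  show ?thesis unfolding lin_span_def
    by (intro CollectI exI[of _ "A \<union> B"] exI[of _ e] conjI) (use A B eq in auto)
qed

lemma span_scale: assumes "f \<in> lin_span S" shows "(\<lambda>x. a * f x) \<in> lin_span S"
proof -
  obtain A c where A: "finite A" "A \<subseteq> S" "f = (\<lambda>x. \<Sum>v\<in>A. c v * v x)"
    using assms(1) unfolding lin_span_def by blast
  have eq: "(\<lambda>x. a * f x) = (\<lambda>x. \<Sum>v\<in>A. (a * c v) * v x)"
    using A by (simp add: sum_distrib_left mult_ac)
  show ?thesis unfolding lin_span_def
    by (intro CollectI exI[of _ A] exI[of _ "\<lambda>v. a * c v"] conjI) (use A eq in auto)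
qed

lemma span_sum: "finite I \<Longrightarrow> (\<forall>i\<in>I. h i \<in> lin_span S) \<Longrightarrow> (\<lambda>x. \<Sum>i\<in>I. c i * h i x) \<in> lin_span S"
proof (induction I rule: finite_induct)
  case empty then show ?case using span_zero by simp
next
  case (insert i I)
  have "(\<lambda>x. c i * h i x + (\<Sum>i\<in>I. c i * h i x)) \<in> lin_span S"
    using insert by (intro span_add span_scale) auto
  then show ?case using insert by simp
qed

lemma span_sum1: "finite I \<Longrightarrow> (\<forall>i\<in>I. h i \<in> lin_span S) \<Longrightarrow> (\<lambda>x. \<Sum>i\<in>I. h i x) \<in> lin_span S"
  using span_sum[of I h S "\<lambda>_. 1"] by simp

lemma finsupp_sum: "finite A \<Longrightarrow> (\<forall>v\<in>A. finsupp v) \<Longrightarrow> finsupp (\<lambda>x. \<Sum>v\<in>A. c v * v x)"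
proof -
  assume A: "finite A" "\<forall>v\<in>A. finsupp v"
  have "{x. (\<Sum>v\<in>A. c v * v x) \<noteq> 0} \<subseteq> (\<Union>v\<in>A. {x. v x \<noteq> 0})"
    by (auto elim: sum.not_neutral_contains_not_neutral, metis (no_types, lifting) mult_zero_right sum.neutral)
  moreover have "finite (\<Union>v\<in>A. {x. v x \<noteq> 0})" using A by (auto simp: finsupp_def)
  ultimately show ?thesis unfolding finsupp_def by (rule finite_subset)
qed

lemma span_finsupp: "(\<forall>v\<in>S. finsupp v) \<Longrightarrow> f \<in> lin_span S \<Longrightarrow> finsupp f"
proof -
  assume S: "\<forall>v\<in>S. finsupp v" and f: "f \<in> lin_span S"
  obtain A c where A: "finite A" "A \<subseteq> S" "f = (\<lambda>x. \<Sum>v\<in>A. c v * v x)"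
    using f unfolding lin_span_def by blast
  show ?thesis using finsupp_sum[of A c] A S by auto
qed

lemma finsupp_M: "finsupp (M t)"
  unfolding finsupp_def using supp_M finite_Y by (rule finite_subset)

lemma coprod_alt: "finsupp f \<Longrightarrow> finite S \<Longrightarrow> {t. f t \<noteq> 0} \<subseteq> S \<Longrightarrow>
  coprod f (a, b) = (\<Sum>t\<in>S. f t * of_nat (card {i. i \<le> inodes t \<and> split_at t i = (a, b)}))"
  unfolding coprod_def by (simp, rule sum.mono_neutral_left) auto

lemma coprod_lin: assumes A: "finite A" "\<forall>v\<in>A. finsupp v"
  shows "coprod (\<lambda>x. \<Sum>v\<in>A. c v * v x) = (\<lambda>p. \<Sum>v\<in>A. c v * coprod v p)"
proof
  fix p :: "tree \<times> tree"
  obtain a b where p: "p = (a, b)" by fastforce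
  define S where "S = (\<Union>v\<in>A. {x. v x \<noteq> 0})"
  have fS: "finite S" using A by (auto simp: S_def finsupp_def)
  have sub: "{x. (\<Sum>v\<in>A. c v * v x) \<noteq> 0} \<subseteq> S"
    by (auto simp: S_def elim: sum.not_neutral_contains_not_neutral, metis (no_types, lifting) mult_zero_right sum.neutral)
  let ?N = "\<lambda>t. of_nat (card {i. i \<le> inodes t \<and> split_at t i = (a, b)}) :: rat"
  have "coprod (\<lambda>x. \<Sum>v\<in>A. c v * v x) (a, b) = (\<Sum>t\<in>S. (\<Sum>v\<in>A. c v * v t) * ?N t)"
    by (rule coprod_alt[OF finsupp_sum[OF A] fS sub])
  also have "\<dots> = (\<Sum>v\<in>A. c v * (\<Sum>t\<in>S. v t * ?N t))"
    by (simp add: sum_distrib_right sum_distrib_left sum.swap[of _ S] mult_ac)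
  also have "\<dots> = (\<Sum>v\<in>A. c v * coprod v (a, b))"
  proof (rule sum.cong[OF refl])
    fix v assume v: "v \<in> A"
    have "coprod v (a, b) = (\<Sum>t\<in>S. v t * ?N t)"
      by (rule coprod_alt) (use v A fS in \<open>auto simp: S_def\<close>)
    then show "c v * (\<Sum>t\<in>S. v t * ?N t) = c v * coprod v (a, b)" by simp
  qed
  finally show "coprod (\<lambda>x. \<Sum>v\<in>A. c v * v x) p = (\<Sum>v\<in>A. c v * coprod v p)" using p by simp
qed

abbreviation clen :: "tree \<Rightarrow> nat" where "clen t \<equiv> length (comps t)"

lemma coef_lin: "coef (\<lambda>x. \<Sum>v\<in>A. c v * v x) s = (\<Sum>v\<in>A. c v * coef v s)"
  by (simp add: coef_sum coef_scale)

lemma grade_elem: assumes "f \<in> grade k"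
  shows "finsupp f" "coef f s \<noteq> 0 \<Longrightarrow> s \<in> Ycomp k"
proof -
  obtain A c where A: "finite A" "A \<subseteq> {M t | t. t \<in> Ycomp k}" "f = (\<lambda>x. \<Sum>v\<in>A. c v * v x)"
    using assms unfolding grade_def lin_span_def by blast
  show "finsupp f" using assms unfolding grade_def
    by (rule span_finsupp[rotated]) (auto simp: finsupp_M)
  assume "coef f s \<noteq> 0"
  then have "(\<Sum>v\<in>A. c v * coef v s) \<noteq> 0" using A(3) coef_lin by simp
  then obtain v where v: "v \<in> A" "c v * coef v s \<noteq> 0"
    by (metis (no_types, lifting) sum.neutral)
  then obtain t where t: "v = M t" "t \<in> Ycomp k" using A(2) by blast
  then have "coef (M t) s \<noteq> 0" using v by simp
  then have "t = s" by (simp add: coef_M split: if_splits)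
  then show "s \<in> Ycomp k" using t by simp
qed

lemma M_grade: "M t \<in> grade (clen t)"
  unfolding grade_def by (rule span_base) (auto simp: Ycomp_eq)

lemma length_comps_drop: "j \<le> length (comps t) \<Longrightarrow> length (comps (fld (drop j (comps t)))) = length (comps t) - j"
proof -
  have "\<forall>p\<in>set (drop j (comps t)). progressive p" using comps_prog by (meson in_set_dropD)
  then show ?thesis by (simp add: comps_fld)
qed

lemma Y0: "Y 0 = {Leaf}"
  by (auto simp: Y_def elim: inodes.elims)

lemma coef_Leaf: "coef f Leaf = f Leaf"
  by (simp add: coef_def Y0 zeta_def)

lemma partA: assumes f: "f \<in> YSym"
  shows "\<exists>!g::nat \<Rightarrow> tree \<Rightarrow> rat.
            (\<forall>k. g k \<in> grade k) \<and> finite {k. g k \<noteq> (\<lambda>_. 0)} \<and>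
            f = (\<lambda>t. \<Sum>k\<in>{k. g k \<noteq> (\<lambda>_. 0)}. g k t)"
proof -
  have fs: "finsupp f" using f by (simp add: YSym_def)
  define Sf where "Sf = {s. coef f s \<noteq> 0}"
  have fin: "finite Sf" unfolding Sf_def by (rule coef_supp_finite[OF fs])
  define g where "g k = (\<lambda>u. \<Sum>s\<in>Sf \<inter> Ycomp k. coef f s * M s u)" for k
  have g1: "g k \<in> grade k" for k
    unfolding g_def grade_def by (rule span_sum[where h=M and c="coef f"]) (use fin in \<open>auto intro: span_base\<close>)
  have sub: "{k. g k \<noteq> (\<lambda>_. 0)} \<subseteq> clen ` Sf"
  proof
    fix k assume "k \<in> {k. g k \<noteq> (\<lambda>_. 0)}"
    then have "Sf \<inter> Ycomp k \<noteq> {}" by (auto simp: g_def)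
    then show "k \<in> clen ` Sf" by (auto simp: Ycomp_eq)
  qed
  have g2: "finite {k. g k \<noteq> (\<lambda>_. 0)}" using sub fin by (meson finite_imageI finite_subset)
  have g3: "f = (\<lambda>t. \<Sum>k\<in>{k. g k \<noteq> (\<lambda>_. 0)}. g k t)"
  proof
    fix u
    have "f u = (\<Sum>s\<in>Sf. coef f s * M s u)"
      using fun_cong[OF coef_expand[OF fs], of u] unfolding Sf_def by simp
    also have "\<dots> = (\<Sum>k\<in>clen ` Sf. \<Sum>s\<in>{s. s \<in> Sf \<and> clen s = k}. coef f s * M s u)"
      by (rule sum.group[symmetric]) (use fin in auto)
    also have "\<dots> = (\<Sum>k\<in>clen ` Sf. g k u)"
      by (rule sum.cong[OF refl]) (auto simp: g_def Ycomp_eq intro!: sum.cong)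
    also have "\<dots> = (\<Sum>k\<in>{k. g k \<noteq> (\<lambda>_. 0)}. g k u)"
      by (rule sum.mono_neutral_right) (use fin sub in auto)
    finally show "f u = (\<Sum>k\<in>{k. g k \<noteq> (\<lambda>_. 0)}. g k u)" .
  qed
  have uniq: "g' = g" if g'1: "\<forall>k. g' k \<in> grade k" and g'2: "finite {k. g' k \<noteq> (\<lambda>_. 0)}"
     and g'3: "f = (\<lambda>t. \<Sum>k\<in>{k. g' k \<noteq> (\<lambda>_. 0)}. g' k t)" for g'
  proof
    fix k
    define K' where "K' = {k. g' k \<noteq> (\<lambda>_. 0)}"
    have cf: "coef f s = coef (g' (clen s)) s" for s
    proof -
      have "coef f s = coef (\<lambda>t. \<Sum>k\<in>K'. g' k t) s"
        using g'3 unfolding K'_def by simp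
      also have "\<dots> = (\<Sum>j\<in>K'. coef (g' j) s)"
        by (rule coef_sum)
      also have "\<dots> = (\<Sum>j\<in>K'. if j = clen s then coef (g' j) s else 0)"
      proof (rule sum.cong[OF refl])
        fix j
        show "coef (g' j) s = (if j = clen s then coef (g' j) s else 0)"
        proof (cases "j = clen s")
          case False
          have "coef (g' j) s = 0"
          proof (rule ccontr)
            assume "coef (g' j) s \<noteq> 0"
            then have "s \<in> Ycomp j" using grade_elem(2)[OF g'1[rule_format, of j]] by blast
            then show False using False by (simp add: Ycomp_eq)
          qed
          then show ?thesis using False by simp
        qed simp
      qed
      also have "\<dots> = (if clen s \<in> K' then coef (g' (clen s)) s else 0)"
        using g'2 unfolding K'_def by (simp add: sum.delta')
      also have "\<dots> = coef (g' (clen s)) s"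
        by (auto simp: K'_def coef_zero)
      finally show ?thesis .
    qed
    have c0: "coef (g' k) s = (if s \<in> Ycomp k then coef f s else 0)" for s
    proof (cases "s \<in> Ycomp k")
      case True then show ?thesis using cf[of s] by (simp add: Ycomp_eq)
    next
      case False then show ?thesis using grade_elem(2)[OF g'1[rule_format, of k], of s] by auto
    qed
    have "g' k = (\<lambda>u. \<Sum>s\<in>{s. coef (g' k) s \<noteq> 0}. coef (g' k) s * M s u)"
      by (rule coef_expand[OF grade_elem(1)[OF g'1[rule_format, of k]]])
    also have "{s. coef (g' k) s \<noteq> 0} = Sf \<inter> Ycomp k"
      by (auto simp: c0 Sf_def split: if_splits)
    finally show "g' k = g k" unfolding g_def by (auto simp: c0 intro!: sum.cong)
  qed
  show ?thesis
  proof (rule ex1I[of _ g])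
    show "(\<forall>k. g k \<in> grade k) \<and> finite {k. g k \<noteq> (\<lambda>_. 0)} \<and> f = (\<lambda>t. \<Sum>k\<in>{k. g k \<noteq> (\<lambda>_. 0)}. g k t)"
      using g1 g2 g3 by blast
  next
    fix g' assume "(\<forall>k. g' k \<in> grade k) \<and> finite {k. g' k \<noteq> (\<lambda>_. 0)} \<and> f = (\<lambda>t. \<Sum>k\<in>{k. g' k \<noteq> (\<lambda>_. 0)}. g' k t)"
    then show "g' = g" using uniq by blast
  qed
qed

lemma coprod_M_tensor: "coprod (M t) = (\<lambda>p. \<Sum>j\<le>clen t. tensor (M (fld (take j (comps t)))) (M (fld (drop j (comps t)))) p)"
proof
  fix p :: "tree \<times> tree"
  obtain a b where p: "p = (a, b)" by fastforce
  show "coprod (M t) p = (\<Sum>j\<le>clen t. tensor (M (fld (take j (comps t)))) (M (fld (drop j (comps t)))) p)"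
    unfolding p coprod_M by (simp add: tensor_def)
qed

lemma partB: assumes f: "f \<in> grade k"
  shows "coprod f \<in> lin_span (\<Union>i\<le>k. {tensor x y | x y. x \<in> grade i \<and> y \<in> grade (k - i)})"
proof -
  let ?U = "\<Union>i\<le>k. {tensor x y | x y. x \<in> grade i \<and> y \<in> grade (k - i)}"
  obtain A c where A: "finite A" "A \<subseteq> {M t | t. t \<in> Ycomp k}" "f = (\<lambda>x. \<Sum>v\<in>A. c v * v x)"
    using f unfolding grade_def lin_span_def by blast
  have fsA: "\<forall>v\<in>A. finsupp v" using A(2) finsupp_M by blast
  have "coprod f = (\<lambda>p. \<Sum>v\<in>A. c v * coprod v p)"
    unfolding A(3) by (rule coprod_lin[OF A(1) fsA])
  moreover have "(\<lambda>p. \<Sum>v\<in>A. c v * coprod v p) \<in> lin_span ?U"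
  proof (rule span_sum[OF A(1)], rule ballI)
    fix v assume "v \<in> A"
    then obtain t where t: "v = M t" "clen t = k" using A(2) by (auto simp: Ycomp_eq)
    have "(\<lambda>p. \<Sum>j\<le>clen t. tensor (M (fld (take j (comps t)))) (M (fld (drop j (comps t)))) p) \<in> lin_span ?U"
    proof (rule span_sum1, simp, rule ballI, rule span_base)
      fix j assume j: "j \<in> {..clen t}"
      have "M (fld (take j (comps t))) \<in> grade j"
        using M_grade[of "fld (take j (comps t))"] length_comps_take[of j t] j by simp
      moreover have "M (fld (drop j (comps t))) \<in> grade (k - j)"
        using M_grade[of "fld (drop j (comps t))"] length_comps_drop[of j t] j t by simp
      ultimately show "tensor (M (fld (take j (comps t)))) (M (fld (drop j (comps t)))) \<in> ?U"
        using j t by blast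
    qed
    then show "coprod v \<in> lin_span ?U" using t coprod_M_tensor by simp
  qed
  ultimately show ?thesis by simp
qed

lemma partC: assumes "f \<in> grade k" "k \<ge> 1" shows "counit f = 0"
proof (rule ccontr)
  assume "counit f \<noteq> 0"
  then have "coef f Leaf \<noteq> 0" by (simp add: counit_def coef_Leaf)
  then have "Leaf \<in> Ycomp k" using grade_elem(2)[OF assms(1)] by blast
  then show False using assms(2) by (simp add: Ycomp_eq)
qed

lemma W_iff: "set w \<subseteq> Ycomp 1 \<longleftrightarrow> (\<forall>p\<in>set w. progressive p)"
  using Ycomp1 by auto

lemma fld_inj: "\<forall>p\<in>set w. progressive p \<Longrightarrow> \<forall>p\<in>set w'. progressive p \<Longrightarrow> fld w = fld w' \<Longrightarrow> w = w'"
  by (metis comps_fld)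

lemma partD: "\<exists>\<phi> :: tree list \<Rightarrow> tree \<Rightarrow> rat.
            let W = {w. set w \<subseteq> Ycomp 1} in
              lin_indep_on W \<phi> \<and> lin_span (\<phi> ` W) = YSym
            \<and> (\<forall>k. lin_span (\<phi> ` {w\<in>W. length w = k}) = grade k)
            \<and> (\<forall>w\<in>W. coprod (\<phi> w) =
                  (\<lambda>p. \<Sum>i\<le>length w. tensor (\<phi> (take i w)) (\<phi> (drop i w)) p))
            \<and> (\<forall>w\<in>W. counit (\<phi> w) = (if w = [] then 1 else 0))
            \<and> (\<forall>t\<in>Ycomp 1. \<phi> [t] = M t)"
proof (rule exI[of _ "\<lambda>w. M (fld w)"], unfold Let_def, intro conjI)
  let ?W = "{w. set w \<subseteq> Ycomp 1}"
  let ?\<phi> = "\<lambda>w. M (fld w)"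
  show "lin_indep_on ?W ?\<phi>"
    unfolding lin_indep_on_def
  proof (intro allI impI ballI)
    fix A c w0
    assume h: "finite A \<and> A \<subseteq> ?W \<and> (\<forall>x. (\<Sum>w\<in>A. c w * M (fld w) x) = 0)" and w0: "w0 \<in> A"
    have "(\<lambda>x. \<Sum>w\<in>A. c w * M (fld w) x) = (\<lambda>x. 0)" using h by auto
    then have "0 = coef (\<lambda>x. \<Sum>w\<in>A. c w * M (fld w) x) (fld w0)" by (simp add: coef_zero)
    also have "\<dots> = (\<Sum>w\<in>A. c w * coef (M (fld w)) (fld w0))"
      by (simp add: coef_sum coef_scale)
    also have "\<dots> = (\<Sum>w\<in>A. if w = w0 then c w else 0)"
    proof (rule sum.cong[OF refl])
      fix w assume "w \<in> A"
      then have "fld w = fld w0 \<longleftrightarrow> w = w0" using h w0 fld_inj W_iff by blast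
      then show "c w * coef (M (fld w)) (fld w0) = (if w = w0 then c w else 0)" by (simp add: coef_M)
    qed
    also have "\<dots> = c w0" using h w0 by (simp add: sum.delta')
    finally show "c w0 = 0" by simp
  qed
  show "lin_span (?\<phi> ` ?W) = YSym"
  proof
    show "lin_span (?\<phi> ` ?W) \<subseteq> YSym"
      using span_finsupp[of "?\<phi> ` ?W"] finsupp_M by (auto simp: YSym_def)
  next
    show "YSym \<subseteq> lin_span (?\<phi> ` ?W)"
    proof
      fix f assume f: "f \<in> YSym"
      then have fs: "finsupp f" by (simp add: YSym_def)
      have "(\<lambda>u. \<Sum>s\<in>{s. coef f s \<noteq> 0}. coef f s * M s u) \<in> lin_span (?\<phi> ` ?W)"
      proof (rule span_sum[OF coef_supp_finite[OF fs]], rule ballI, rule span_base)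
        fix s
        have "comps s \<in> ?W" using comps_prog W_iff by blast
        then show "M s \<in> ?\<phi> ` ?W" by (rule image_eqI[rotated]) simp
      qed
      then show "f \<in> lin_span (?\<phi> ` ?W)" using coef_expand[OF fs] by simp
    qed
  qed
  show "\<forall>k. lin_span (?\<phi> ` {w\<in>?W. length w = k}) = grade k"
  proof
    fix k
    have "?\<phi> ` {w\<in>?W. length w = k} = {M t | t. t \<in> Ycomp k}"
    proof
      show "?\<phi> ` {w\<in>?W. length w = k} \<subseteq> {M t | t. t \<in> Ycomp k}"
      proof
        fix v assume "v \<in> ?\<phi> ` {w\<in>?W. length w = k}"
        then obtain w where w: "w \<in> ?W" "length w = k" "v = M (fld w)" by blast
        then have "comps (fld w) = w" using W_iff comps_fld by blast
        then have "fld w \<in> Ycomp k" using w by (simp add: Ycomp_eq)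
        then show "v \<in> {M t | t. t \<in> Ycomp k}" using w by blast
      qed
    next
      show "{M t | t. t \<in> Ycomp k} \<subseteq> ?\<phi> ` {w\<in>?W. length w = k}"
      proof
        fix v assume "v \<in> {M t | t. t \<in> Ycomp k}"
        then obtain t where t: "v = M t" "clen t = k" by (auto simp: Ycomp_eq)
        have "comps t \<in> {w\<in>?W. length w = k}" using comps_prog W_iff t by blast
        then show "v \<in> ?\<phi> ` {w\<in>?W. length w = k}" using t fld_comps[of t] by (intro image_eqI[rotated]) auto
      qed
    qed
    then show "lin_span (?\<phi> ` {w\<in>?W. length w = k}) = grade k" by (simp add: grade_def)
  qed
  show "\<forall>w\<in>?W. coprod (?\<phi> w) = (\<lambda>p. \<Sum>i\<le>length w. tensor (?\<phi> (take i w)) (?\<phi> (drop i w)) p)"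
  proof
    fix w assume "w \<in> ?W"
    then have "comps (fld w) = w" using W_iff comps_fld by blast
    then show "coprod (?\<phi> w) = (\<lambda>p. \<Sum>i\<le>length w. tensor (?\<phi> (take i w)) (?\<phi> (drop i w)) p)"
      using coprod_M_tensor[of "fld w"] by simp
  qed
  show "\<forall>w\<in>?W. counit (?\<phi> w) = (if w = [] then 1 else 0)"
  proof
    fix w assume w: "w \<in> ?W"
    show "counit (?\<phi> w) = (if w = [] then 1 else 0)"
    proof (cases w)
      case Nil then show ?thesis by (simp add: counit_def M_mq)
    next
      case (Cons p w')
      have "\<forall>p\<in>set w. progressive p" using w W_iff by blast
      then have "progressive p" using Cons by simp
      then obtain l where "p = Node l Leaf" by (auto simp: progressive_def)
      then have "inodes (fld w) \<noteq> inodes Leaf" using Cons by simp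
      then have "mq (fld w) Leaf = 0" using mq_size by blast
      then show ?thesis using Cons by (simp add: counit_def M_mq)
    qed
  qed
  show "\<forall>t\<in>Ycomp 1. ?\<phi> [t] = M t" by simp
qed

theorem theorem5p2:
  shows "(\<forall>f\<in>YSym. \<exists>!g::nat \<Rightarrow> tree \<Rightarrow> rat.
            (\<forall>k. g k \<in> grade k) \<and> finite {k. g k \<noteq> (\<lambda>_. 0)} \<and>
            f = (\<lambda>t. \<Sum>k\<in>{k. g k \<noteq> (\<lambda>_. 0)}. g k t))
       \<and> (\<forall>k. coprod ` grade k \<subseteq>
              lin_span (\<Union>i\<le>k. {tensor x y | x y. x \<in> grade i \<and> y \<in> grade (k - i)}))
       \<and> (\<forall>k\<ge>1. \<forall>f\<in>grade k. counit f = 0)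
       \<and> (\<exists>\<phi> :: tree list \<Rightarrow> tree \<Rightarrow> rat.
            let W = {w. set w \<subseteq> Ycomp 1} in
              lin_indep_on W \<phi> \<and> lin_span (\<phi> ` W) = YSym
            \<and> (\<forall>k. lin_span (\<phi> ` {w\<in>W. length w = k}) = grade k)
            \<and> (\<forall>w\<in>W. coprod (\<phi> w) =
                  (\<lambda>p. \<Sum>i\<le>length w. tensor (\<phi> (take i w)) (\<phi> (drop i w)) p))
            \<and> (\<forall>w\<in>W. counit (\<phi> w) = (if w = [] then 1 else 0))
            \<and> (\<forall>t\<in>Ycomp 1. \<phi> [t] = M t))"
  using partA partB partC partD by blast

end
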